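(* Let $d\ge3$, $c\ge1$ and $\kappa\ge1$ be such that $\kappa/2-4dc>0$. For $n$ large enough, $$P\big(\mathcal{E}(f_N)\ge\kappa\,n^d\ln n,\ |R_N|\le cn^d\big)\le\exp\Big(-\big(\frac\kappa2-4dc\big)n^d\ln n\Big).$$
   Context: $P$ is the law of the simple random walk $(S_k)$ on $\mathbb{Z}^d$ from $0$. $N=n^{d+2}$. $R_N$ is the set of sites visited up to time $N$. $L_N(x)=\sum_{k=0}^{N-1}1_{\{S_k=x\}}$, $f_N=\sqrt{L_N}$, and $\mathcal{E}(f)=\frac1{2d}\sum_{y,z\in\mathbb{Z}^d,|y-z|=1}(f(y)-f(z))^2$ (ordered pairs). *)

theory Defs
  imports "HOL-Analysis.Analysis" "HOL-Probability.Probability"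
begin

text \<open>Points of the lattice Z^d are represented as functions nat => int vanishing
outside the coordinates 0..d-1.\<close>

definition lattice :: "nat \<Rightarrow> (nat \<Rightarrow> int) set" where
  "lattice d = {x. \<forall>j\<ge>d. x j = 0}"

definition unit_steps :: "nat \<Rightarrow> (nat \<Rightarrow> int) set" where
  "unit_steps d = {(\<lambda>j. if j = i then s else 0) | i s. i < d \<and> (s = 1 \<or> s = -1)}"

definition adjacent :: "nat \<Rightarrow> (nat \<Rightarrow> int) \<Rightarrow> (nat \<Rightarrow> int) \<Rightarrow> bool" where
  "adjacent d y z \<longleftrightarrow> y \<in> lattice d \<and> z \<in> lattice d \<and> (\<Sum>j<d. \<bar>y j - z j\<bar>) = 1"

text \<open>The set of step sequences of length N; under the simple random walk law
the first N increments are uniformly distributed on this set.\<close>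
definition walks :: "nat \<Rightarrow> nat \<Rightarrow> (nat \<Rightarrow> int) list set" where
  "walks d N = {xs. length xs = N \<and> set xs \<subseteq> unit_steps d}"

definition SRW :: "nat \<Rightarrow> nat \<Rightarrow> (nat \<Rightarrow> int) list pmf" where
  "SRW d N = pmf_of_set (walks d N)"

definition pos :: "(nat \<Rightarrow> int) list \<Rightarrow> nat \<Rightarrow> (nat \<Rightarrow> int)" where
  "pos xs k = (\<lambda>j. \<Sum>i<k. (xs ! i) j)"

definition range_set :: "(nat \<Rightarrow> int) list \<Rightarrow> nat \<Rightarrow> (nat \<Rightarrow> int) set" where
  "range_set xs N = pos xs ` {0..N}"

definition local_time :: "(nat \<Rightarrow> int) list \<Rightarrow> nat \<Rightarrow> (nat \<Rightarrow> int) \<Rightarrow> nat" where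
  "local_time xs N x = card {k. k < N \<and> pos xs k = x}"

definition dirichlet :: "nat \<Rightarrow> ((nat \<Rightarrow> int) \<Rightarrow> real) \<Rightarrow> real" where
  "dirichlet d f = (1 / (2 * real d)) *
     infsum (\<lambda>(y, z). (f y - f z)\<^sup>2) {(y, z). adjacent d y z}"

end

theory Submission
  imports Defs
begin


definition addv :: "(nat \<Rightarrow> int) \<Rightarrow> (nat \<Rightarrow> int) \<Rightarrow> (nat \<Rightarrow> int)" where
  "addv x e = (\<lambda>j. x j + e j)"

lemma unit_steps_lattice: "unit_steps d \<subseteq> lattice d"
  by (auto simp: unit_steps_def lattice_def)

lemma finite_unit_steps: "finite (unit_steps d)"
proof -
  have "unit_steps d = (\<lambda>(i,s). (\<lambda>j. if j = i then s else 0)) ` ({..<d} \<times> {1,-1})"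
    by (auto simp: unit_steps_def image_iff)
  then show ?thesis by simp
qed

lemma card_unit_steps: "card (unit_steps d) = 2 * d"
proof -
  have eq: "unit_steps d = (\<lambda>(i,s). (\<lambda>j. if j = i then s else 0)) ` ({..<d} \<times> {1,-1::int})"
    by (auto simp: unit_steps_def image_iff)
  have "inj_on (\<lambda>(i,s). (\<lambda>j. if j = i then s else (0::int))) ({..<d} \<times> {1,-1::int})"
  proof (rule inj_onI, clarify)
    fix i s i' s'
    assume h: "(\<lambda>j. if j = i then s else (0::int)) = (\<lambda>j. if j = i' then s' else 0)"
      and "s \<in> {1,-1}" "s' \<in> {1,-1}"
    then have "s \<noteq> 0" "s' \<noteq> 0" by auto
    from fun_cong[OF h, of i] fun_cong[OF h, of i'] \<open>s \<noteq> 0\<close> \<open>s' \<noteq> 0\<close>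
    show "i = i' \<and> s = s'" by (auto split: if_splits)
  qed
  then have "card (unit_steps d) = card ({..<d} \<times> {1,-1::int})"
    unfolding eq by (rule card_image)
  then show ?thesis by simp
qed

lemma unit_steps_ne: "d \<ge> 1 \<Longrightarrow> unit_steps d \<noteq> {}"
  using card_unit_steps[of d] by auto

lemma lattice_addv: "x \<in> lattice d \<Longrightarrow> e \<in> lattice d \<Longrightarrow> addv x e \<in> lattice d"
  by (auto simp: lattice_def addv_def)

lemma pos_0: "pos xs 0 = (\<lambda>j. 0)"
  by (simp add: pos_def)

lemma pos_Suc: "pos xs (Suc i) = addv (pos xs i) (xs ! i)"
  by (simp add: pos_def addv_def)

lemma pos_append: "k \<le> length xs \<Longrightarrow> pos (xs @ ys) k = pos xs k"
  unfolding pos_def by (intro ext sum.cong) (auto simp: nth_append)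

lemma pos_lattice: "set xs \<subseteq> unit_steps d \<Longrightarrow> k \<le> length xs \<Longrightarrow> pos xs k \<in> lattice d"
proof (induction k)
  case 0 then show ?case by (simp add: pos_0 lattice_def)
next
  case (Suc k)
  have "xs ! k \<in> set xs" using Suc.prems by simp
  then have "xs ! k \<in> lattice d" using unit_steps_lattice[of d] Suc.prems by blast
  with Suc show ?case by (simp add: pos_Suc lattice_addv)
qed

lemma walks_Suc: "walks d (Suc N) = (\<lambda>(xs,e). xs @ [e]) ` (walks d N \<times> unit_steps d)"
proof (rule set_eqI, rule iffI)
  fix ys assume "ys \<in> walks d (Suc N)"
  then have "length ys = Suc N" "set ys \<subseteq> unit_steps d" by (auto simp: walks_def)
  then obtain xs e where "ys = xs @ [e]" by (metis append_butlast_last_id length_0_conv nat.simps(3))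
  with \<open>length ys = Suc N\<close> \<open>set ys \<subseteq> unit_steps d\<close> show "ys \<in> (\<lambda>(xs,e). xs @ [e]) ` (walks d N \<times> unit_steps d)"
    by (auto simp: walks_def image_iff)
qed (auto simp: walks_def)

lemma finite_walks: "finite (walks d N)"
  unfolding walks_def using finite_lists_length_eq[OF finite_unit_steps] by (simp add: conj_commute)

lemma card_walks: "card (walks d N) = (2*d) ^ N"
  unfolding walks_def using card_lists_length_eq[OF finite_unit_steps, of d N]
  by (simp add: conj_commute card_unit_steps)

definition Aop :: "nat \<Rightarrow> ((nat \<Rightarrow> int) \<Rightarrow> real) \<Rightarrow> (nat \<Rightarrow> int) \<Rightarrow> real" where
  "Aop d u x = (\<Sum>e\<in>unit_steps d. u (addv x e))"

definition Wt :: "nat \<Rightarrow> ((nat \<Rightarrow> int) \<Rightarrow> real) \<Rightarrow> (nat \<Rightarrow> int) list \<Rightarrow> real" where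
  "Wt d u xs = (\<Prod>i<length xs. u (pos xs (Suc i)) / Aop d u (pos xs i))"

lemma Aop_pos: "d \<ge> 1 \<Longrightarrow> (\<And>x. u x > 0) \<Longrightarrow> Aop d u x > 0"
  unfolding Aop_def using finite_unit_steps unit_steps_ne
  by (intro sum_pos) auto

lemma Wt_sum: assumes "d \<ge> 1" "\<And>x. u x > 0"
  shows "(\<Sum>xs\<in>walks d N. Wt d u xs) = 1"
proof (induction N)
  case 0
  have "walks d 0 = {[]}" by (auto simp: walks_def)
  then show ?case by (simp add: Wt_def)
next
  case (Suc N)
  have inj: "inj_on (\<lambda>(xs,e). xs @ [e]) (walks d N \<times> unit_steps d)"
    by (rule inj_onI) auto
  have step: "Wt d u (xs @ [e]) = Wt d u xs * (u (addv (pos xs N) e) / Aop d u (pos xs N))"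
    if "xs \<in> walks d N" for xs e
  proof -
    have len: "length xs = N" using that by (simp add: walks_def)
    have "Wt d u (xs @ [e]) = (\<Prod>i<Suc N. u (pos (xs@[e]) (Suc i)) / Aop d u (pos (xs@[e]) i))"
      using len by (simp add: Wt_def)
    also have "\<dots> = (\<Prod>i<N. u (pos (xs@[e]) (Suc i)) / Aop d u (pos (xs@[e]) i)) *
        (u (pos (xs@[e]) (Suc N)) / Aop d u (pos (xs@[e]) N))"
      by simp
    also have "(\<Prod>i<N. u (pos (xs@[e]) (Suc i)) / Aop d u (pos (xs@[e]) i)) = Wt d u xs"
      unfolding Wt_def len using len by (intro prod.cong) (auto simp: pos_append)
    also have "pos (xs@[e]) (Suc N) = addv (pos xs N) e"
      using len by (simp add: pos_Suc pos_append nth_append)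
    also have "pos (xs@[e]) N = pos xs N" using len by (simp add: pos_append)
    finally show ?thesis .
  qed
  have "(\<Sum>ys\<in>walks d (Suc N). Wt d u ys) = (\<Sum>(xs,e)\<in>walks d N \<times> unit_steps d. Wt d u (xs @ [e]))"
    unfolding walks_Suc by (subst sum.reindex[OF inj]) (simp add: case_prod_unfold)
  also have "\<dots> = (\<Sum>xs\<in>walks d N. \<Sum>e\<in>unit_steps d. Wt d u (xs @ [e]))"
    by (rule sum.cartesian_product[symmetric])
  also have "\<dots> = (\<Sum>xs\<in>walks d N. Wt d u xs)"
  proof (rule sum.cong[OF refl])
    fix xs assume xs: "xs \<in> walks d N"
    have "(\<Sum>e\<in>unit_steps d. Wt d u (xs @ [e])) =
       Wt d u xs * ((\<Sum>e\<in>unit_steps d. u (addv (pos xs N) e)) / Aop d u (pos xs N))"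
      using step[OF xs] by (simp add: sum_distrib_left sum_divide_distrib)
    also have "\<dots> = Wt d u xs"
    proof -
      have "Aop d u (pos xs N) > 0" by (rule Aop_pos[OF assms])
      then show ?thesis by (simp add: Aop_def[symmetric])
    qed
    finally show "(\<Sum>e\<in>unit_steps d. Wt d u (xs @ [e])) = Wt d u xs" .
  qed
  finally show ?case using Suc by simp
qed



lemma adjacent_iff: "adjacent d y z \<longleftrightarrow> y \<in> lattice d \<and> (\<exists>e\<in>unit_steps d. z = addv y e)"
proof
  assume adj: "adjacent d y z"
  then have yl: "y \<in> lattice d" and zl: "z \<in> lattice d" and s1: "(\<Sum>j<d. \<bar>y j - z j\<bar>) = 1"
    by (auto simp: adjacent_def)
  have "\<exists>i<d. y i \<noteq> z i"
  proof (rule ccontr)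
    assume "\<not> ?thesis"
    then have "(\<Sum>j<d. \<bar>y j - z j\<bar>) = 0" by (intro sum.neutral) auto
    with s1 show False by simp
  qed
  then obtain i where i: "i < d" "y i \<noteq> z i" by auto
  have split: "(\<Sum>j<d. \<bar>y j - z j\<bar>) = \<bar>y i - z i\<bar> + (\<Sum>j\<in>{..<d}-{i}. \<bar>y j - z j\<bar>)"
    using i by (subst sum.remove[of _ i]) auto
  have ge: "\<bar>y i - z i\<bar> \<ge> 1" using i by auto
  have nn: "(\<Sum>j\<in>{..<d}-{i}. \<bar>y j - z j\<bar>) \<ge> 0" by (intro sum_nonneg) auto
  have r0: "(\<Sum>j\<in>{..<d}-{i}. \<bar>y j - z j\<bar>) = 0" and a1: "\<bar>y i - z i\<bar> = 1"
    using split s1 ge nn by linarith+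
  have oth: "y j = z j" if "j \<noteq> i" for j
  proof (cases "j < d")
    case True
    have "\<forall>j\<in>{..<d}-{i}. \<bar>y j - z j\<bar> = 0"
      using r0 by (subst (asm) sum_nonneg_eq_0_iff) auto
    with True that show ?thesis by auto
  next
    case False then show ?thesis using yl zl by (auto simp: lattice_def)
  qed
  define s where "s = z i - y i"
  have "s = 1 \<or> s = -1" using a1 unfolding s_def by linarith
  then have "(\<lambda>j. if j = i then s else 0) \<in> unit_steps d"
    using i by (auto simp: unit_steps_def)
  moreover have "z = addv y (\<lambda>j. if j = i then s else 0)"
    using oth by (auto simp: addv_def s_def)
  ultimately show "y \<in> lattice d \<and> (\<exists>e\<in>unit_steps d. z = addv y e)" using yl by blast
next
  assume "y \<in> lattice d \<and> (\<exists>e\<in>unit_steps d. z = addv y e)"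
  then obtain e where yl: "y \<in> lattice d" and e: "e \<in> unit_steps d" and z: "z = addv y e" by blast
  from e obtain i s where es: "e = (\<lambda>j. if j = i then s else 0)" "i < d" "s = 1 \<or> s = -1"
    by (auto simp: unit_steps_def)
  have zl: "z \<in> lattice d" using z yl e unit_steps_lattice lattice_addv by blast
  have "(\<Sum>j<d. \<bar>y j - z j\<bar>) = (\<Sum>j<d. if j = i then \<bar>s\<bar> else 0)"
    by (intro sum.cong) (auto simp: z es addv_def)
  also have "\<dots> = \<bar>s\<bar>" using es by (simp add: sum.delta) 
  also have "\<dots> = 1" using es by auto
  finally show "adjacent d y z" using yl zl by (simp add: adjacent_def)
qed

definition subv :: "(nat \<Rightarrow> int) \<Rightarrow> (nat \<Rightarrow> int) \<Rightarrow> (nat \<Rightarrow> int)" where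
  "subv x e = (\<lambda>j. x j - e j)"

lemma addv_subv[simp]: "addv (subv x e) e = x"
  by (simp add: addv_def subv_def)

lemma subv_lattice: "x \<in> lattice d \<Longrightarrow> e \<in> lattice d \<Longrightarrow> subv x e \<in> lattice d"
  by (auto simp: lattice_def subv_def)

lemma inj_addv: "inj (\<lambda>y. addv y e)"
  by (rule injI) (simp add: addv_def fun_eq_iff)

lemma addv_cancel: "addv y a = addv y b \<Longrightarrow> a = b"
  by (simp add: addv_def fun_eq_iff)

lemma shift_sum:
  fixes h :: "(nat \<Rightarrow> int) \<Rightarrow> real"
  assumes "finite F" "finite S" "\<And>x. x \<notin> S \<Longrightarrow> h x = 0" "(\<lambda>y. subv y e) ` S \<subseteq> F"
  shows "(\<Sum>y\<in>F. h (addv y e)) = (\<Sum>x\<in>S. h x)"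
proof -
  have "(\<Sum>y\<in>F. h (addv y e)) = (\<Sum>x\<in>(\<lambda>y. addv y e) ` F. h x)"
    by (subst sum.reindex) (auto intro: inj_on_subset[OF inj_addv])
  also have "\<dots> = (\<Sum>x\<in>S. h x)"
  proof -
    have sub: "S \<subseteq> (\<lambda>y. addv y e) ` F"
    proof
      fix x assume "x \<in> S"
      then have "subv x e \<in> F" using assms(4) by auto
      then show "x \<in> (\<lambda>y. addv y e) ` F" by (metis addv_subv image_eqI)
    qed
    have "(\<Sum>x\<in>S. h x) = (\<Sum>x\<in>(\<lambda>y. addv y e) ` F. h x)"
      by (rule sum.mono_neutral_left) (use assms sub in auto)
    then show ?thesis by simp
  qed
  finally show ?thesis .
qed

lemma dirichlet_formula:
  fixes g :: "(nat \<Rightarrow> int) \<Rightarrow> real"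
  assumes fin: "finite S" and Sl: "S \<subseteq> lattice d" and g0: "\<And>x. x \<notin> S \<Longrightarrow> g x = 0"
  shows "dirichlet d g = (1 / (2 * real d)) *
     (2 * real (2*d) * (\<Sum>y\<in>S. (g y)\<^sup>2) - 2 * (\<Sum>y\<in>S. g y * Aop d g y))"
proof -
  let ?U = "unit_steps d"
  define F where "F = S \<union> (\<Union>e\<in>?U. (\<lambda>y. subv y e) ` S)"
  have finF: "finite F" unfolding F_def using fin finite_unit_steps by auto
  have Fl: "F \<subseteq> lattice d" unfolding F_def using Sl unit_steps_lattice subv_lattice by blast
  have SF: "S \<subseteq> F" unfolding F_def by auto
  have SeF: "(\<lambda>y. subv y e) ` S \<subseteq> F" if "e \<in> ?U" for e unfolding F_def using that by auto
  define Q where "Q = (\<lambda>(y,e). (y, addv y e)) ` (F \<times> ?U)"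
  define \<phi> where "\<phi> = (\<lambda>(y::nat\<Rightarrow>int, z). (g y - g z)\<^sup>2)"
  have QA: "Q \<subseteq> {(y, z). adjacent d y z}"
    unfolding Q_def using Fl by (auto simp: adjacent_iff)
  have "infsum \<phi> {(y, z). adjacent d y z} = infsum \<phi> Q"
  proof (rule infsum_cong_neutral)
    fix p assume p: "p \<in> {(y, z). adjacent d y z} - Q"
    then obtain y z where pyz: "p = (y,z)" and adj: "adjacent d y z" and nq: "(y,z) \<notin> Q" by auto
    from adj obtain e where e: "e \<in> ?U" and z: "z = addv y e" by (auto simp: adjacent_iff)
    have "y \<notin> F" using nq e z unfolding Q_def by auto
    then have yS: "y \<notin> S" using SF by auto
    have "z \<notin> S"
    proof
      assume "z \<in> S"
      then have "subv z e \<in> F" using SeF[OF e] by auto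
      moreover have "subv z e = y" using z by (auto simp: addv_def subv_def)
      ultimately show False using \<open>y \<notin> F\<close> by simp
    qed
    then show "\<phi> p = 0" using yS g0 by (simp add: \<phi>_def pyz)
  qed (use QA in auto)
  also have "\<dots> = sum \<phi> Q" using finF finite_unit_steps by (simp add: Q_def)
  also have "\<dots> = (\<Sum>(y,e)\<in>F \<times> ?U. (g y - g (addv y e))\<^sup>2)"
    unfolding Q_def
    by (subst sum.reindex) (auto intro!: inj_onI simp: \<phi>_def case_prod_unfold dest: addv_cancel)
  also have "\<dots> = (\<Sum>e\<in>?U. \<Sum>y\<in>F. (g y - g (addv y e))\<^sup>2)"
    by (subst sum.cartesian_product[symmetric]) (rule sum.swap)
  also have "\<dots> = (\<Sum>e\<in>?U. 2 * (\<Sum>y\<in>S. (g y)\<^sup>2) - 2 * (\<Sum>y\<in>S. g y * g (addv y e)))"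
  proof (rule sum.cong[OF refl])
    fix e assume e: "e \<in> ?U"
    have "(\<Sum>y\<in>F. (g y - g (addv y e))\<^sup>2) =
      (\<Sum>y\<in>F. (g y)\<^sup>2) + (\<Sum>y\<in>F. (g (addv y e))\<^sup>2) - 2 * (\<Sum>y\<in>F. g y * g (addv y e))"
      by (simp add: power2_diff sum.distrib sum_subtractf sum_distrib_left algebra_simps)
    also have "(\<Sum>y\<in>F. (g y)\<^sup>2) = (\<Sum>y\<in>S. (g y)\<^sup>2)"
      by (rule sum.mono_neutral_left[symmetric]) (use finF SF g0 in auto)
    also have "(\<Sum>y\<in>F. (g (addv y e))\<^sup>2) = (\<Sum>y\<in>S. (g y)\<^sup>2)"
      by (rule shift_sum[where h = "\<lambda>x. (g x)\<^sup>2"]) (use finF fin g0 SeF[OF e] in auto)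
    also have "(\<Sum>y\<in>F. g y * g (addv y e)) = (\<Sum>y\<in>S. g y * g (addv y e))"
      by (rule sum.mono_neutral_left[symmetric]) (use finF SF g0 in auto)
    finally show "(\<Sum>y\<in>F. (g y - g (addv y e))\<^sup>2) = 2 * (\<Sum>y\<in>S. (g y)\<^sup>2) - 2 * (\<Sum>y\<in>S. g y * g (addv y e))"
      by simp
  qed
  also have "\<dots> = 2 * real (2*d) * (\<Sum>y\<in>S. (g y)\<^sup>2) - 2 * (\<Sum>y\<in>S. g y * Aop d g y)"
    by (simp add: sum_subtractf sum_distrib_left Aop_def card_unit_steps sum.swap[of _ S] mult.assoc)
  finally show ?thesis unfolding dirichlet_def \<phi>_def by simp
qed



lemma local_time_zero: "x \<notin> pos xs ` {..<N} \<Longrightarrow> local_time xs N x = 0"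
  unfolding local_time_def by (auto intro!: arg_cong[where f=card])

lemma local_time_pos: "x \<in> pos xs ` {..<N} \<Longrightarrow> local_time xs N x \<ge> 1"
proof -
  assume "x \<in> pos xs ` {..<N}"
  then obtain k where k: "k < N" "pos xs k = x" by auto
  have "finite {k. k < N \<and> pos xs k = x}" by simp
  moreover have "k \<in> {k. k < N \<and> pos xs k = x}" using k by simp
  ultimately have "card {k. k < N \<and> pos xs k = x} > 0" by (auto simp: card_gt_0_iff)
  then show ?thesis by (simp add: local_time_def)
qed

lemma local_time_le: "local_time xs N x \<le> N"
proof -
  have "local_time xs N x \<le> card {..<N}"
    unfolding local_time_def by (intro card_mono) auto
  then show ?thesis by simp
qed

lemma group_sum:
  fixes h :: "(nat \<Rightarrow> int) \<Rightarrow> real"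
  shows "(\<Sum>i<N. h (pos xs i)) = (\<Sum>x\<in>pos xs ` {..<N}. real (local_time xs N x) * h x)"
proof -
  have "(\<Sum>i<N. h (pos xs i)) = (\<Sum>y\<in>pos xs ` {..<N}. \<Sum>i\<in>{i. i \<in> {..<N} \<and> pos xs i = y}. h (pos xs i))"
    by (rule sum.image_gen) simp
  also have "\<dots> = (\<Sum>x\<in>pos xs ` {..<N}. real (local_time xs N x) * h x)"
  proof (rule sum.cong[OF refl])
    fix y
    have "(\<Sum>i\<in>{i. i \<in> {..<N} \<and> pos xs i = y}. h (pos xs i)) = (\<Sum>i\<in>{i. i \<in> {..<N} \<and> pos xs i = y}. h y)"
      by (rule sum.cong) auto
    also have "\<dots> = real (local_time xs N y) * h y"
      by (simp add: local_time_def)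
    finally show "(\<Sum>i\<in>{i. i \<in> {..<N} \<and> pos xs i = y}. h (pos xs i)) = real (local_time xs N y) * h y" .
  qed
  finally show ?thesis .
qed

lemma sum_local_time: "(\<Sum>x\<in>pos xs ` {..<N}. real (local_time xs N x)) = real N"
  using group_sum[where h="\<lambda>_. 1"] by simp

lemma walk_bound:
  assumes d1: "d \<ge> 1" and xs: "xs \<in> walks d N" and N1: "N \<ge> 1"
  defines "g \<equiv> (\<lambda>x. sqrt (real (local_time xs N x)))"
  defines "u \<equiv> (\<lambda>x. if local_time xs N x > 0 then sqrt (real (local_time xs N x)) else 1 / real N)"
  shows "ln (Wt d u xs) \<ge> dirichlet d g / 2 - real N * ln (2 * real d) - 2 * ln (real N) - 1"
proof -
  define S where "S = pos xs ` {..<N}"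
  define L where "L = (\<lambda>x. real (local_time xs N x))"
  define K where "K = real (2 * d)"
  define \<delta> where "\<delta> = 1 / real N"
  have K0: "K > 0" using d1 by (simp add: K_def)
  have \<delta>0: "\<delta> > 0" and \<delta>1: "\<delta> \<le> 1" using N1 by (auto simp: \<delta>_def)
  have len: "length xs = N" and setxs: "set xs \<subseteq> unit_steps d" using xs by (auto simp: walks_def)
  have finS: "finite S" by (simp add: S_def)
  have Sl: "S \<subseteq> lattice d" unfolding S_def using pos_lattice[OF setxs] len by auto
  have L0: "x \<notin> S \<Longrightarrow> L x = 0" for x by (simp add: L_def S_def local_time_zero)
  have L1: "x \<in> S \<Longrightarrow> L x \<ge> 1" for x using local_time_pos[of x xs N] by (simp add: L_def S_def)
  have LN: "L x \<le> real N" for x using local_time_le[of xs N x] by (simp add: L_def)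
  have g0: "x \<notin> S \<Longrightarrow> g x = 0" for x using L0 by (simp add: g_def L_def)
  have gL: "g x = sqrt (L x)" for x by (simp add: g_def L_def)
  have gsq: "(g x)\<^sup>2 = L x" for x by (simp add: gL L_def)
  have u_pos: "u x > 0" for x using N1 by (auto simp: u_def)
  have uS: "x \<in> S \<Longrightarrow> u x = g x" for x using L1[of x] by (auto simp: u_def g_def L_def)
  have u_ge: "u x \<ge> \<delta>" for x
  proof (cases "local_time xs N x > 0")
    case True
    then have "sqrt (real (local_time xs N x)) \<ge> 1" by simp
    then have "\<delta> \<le> sqrt (real (local_time xs N x))" using \<delta>1 by linarith
    then show ?thesis using True by (simp add: u_def)
  qed (simp add: u_def \<delta>_def)
  have u_le: "u x \<le> g x + \<delta>" for x by (auto simp: u_def g_def \<delta>_def)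
  have A_pos: "Aop d u x > 0" for x by (rule Aop_pos[OF d1 u_pos])
  have A_le: "Aop d u x \<le> Aop d g x + K * \<delta>" for x
  proof -
    have "Aop d u x \<le> (\<Sum>e\<in>unit_steps d. g (addv x e) + \<delta>)"
      unfolding Aop_def by (intro sum_mono u_le)
    also have "\<dots> = Aop d g x + K * \<delta>" by (simp add: Aop_def sum.distrib K_def card_unit_steps)
    finally show ?thesis .
  qed
  have "ln (Wt d u xs) = (\<Sum>i<N. ln (u (pos xs (Suc i)) / Aop d u (pos xs i)))"
    unfolding Wt_def len using u_pos A_pos
    by (subst ln_prod) (auto, metis less_irrefl, metis less_irrefl)
  also have "\<dots> = (\<Sum>i<N. ln (u (pos xs (Suc i)))) - (\<Sum>i<N. ln (Aop d u (pos xs i)))"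
  proof -
    have "(\<Sum>i<N. ln (u (pos xs (Suc i)) / Aop d u (pos xs i))) = (\<Sum>i<N. ln (u (pos xs (Suc i))) - ln (Aop d u (pos xs i)))"
      by (rule sum.cong[OF refl]) (rule ln_divide_pos[OF u_pos A_pos])
    then show ?thesis by (simp add: sum_subtractf)
  qed
  also have "(\<Sum>i<N. ln (u (pos xs (Suc i)))) = (\<Sum>i<N. ln (u (pos xs i))) + ln (u (pos xs N)) - ln (u (pos xs 0))"
  proof -
    have "(\<Sum>i<Suc N. ln (u (pos xs i))) = ln (u (pos xs 0)) + (\<Sum>i<N. ln (u (pos xs (Suc i))))"
      by (rule sum.lessThan_Suc_shift)
    moreover have "(\<Sum>i<Suc N. ln (u (pos xs i))) = (\<Sum>i<N. ln (u (pos xs i))) + ln (u (pos xs N))"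
      by simp
    ultimately show ?thesis by linarith
  qed
  finally have lnW: "ln (Wt d u xs) = ln (u (pos xs N)) - ln (u (pos xs 0)) + (\<Sum>x\<in>S. L x * (ln (u x) - ln (Aop d u x)))"
    unfolding S_def L_def using group_sum[where h="\<lambda>x. ln (u x) - ln (Aop d u x)" and N=N and xs=xs]
    by (simp add: sum_subtractf)
  have pt: "L x * (ln (u x) - ln (Aop d u x)) \<ge> L x - L x * ln K - g x * (Aop d g x + K * \<delta>) / K"
    if xS: "x \<in> S" for x
  proof -
    have Lx: "L x \<ge> 1" using L1[OF xS] .
    have gx: "g x > 0" using Lx by (simp add: gL)
    have ux: "u x = g x" using uS[OF xS] .
    have Ax: "Aop d u x > 0" by (rule A_pos)
    have q: "Aop d u x / (K * g x) > 0" using Ax K0 gx by simp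
    have "ln (Aop d u x) - ln (g x) = ln K + ln (Aop d u x / (K * g x))"
      using Ax K0 gx by (simp add: ln_div ln_mult)
    also have "\<dots> \<le> ln K + (Aop d u x / (K * g x) - 1)"
      using ln_le_minus_one[OF q] by simp
    finally have h1: "ln (Aop d u x) - ln (g x) \<le> ln K + Aop d u x / (K * g x) - 1" by simp
    have "L x * (ln (Aop d u x) - ln (g x)) \<le> L x * (ln K + Aop d u x / (K * g x) - 1)"
      using h1 Lx by (intro mult_left_mono) auto
    also have "L x * (Aop d u x / (K * g x)) = g x * Aop d u x / K"
    proof -
      have "L x = g x * g x" using gsq[of x] by (simp add: power2_eq_square)
      then show ?thesis using gx K0 by (simp add: field_simps)
    qed
    then have "L x * (ln K + Aop d u x / (K * g x) - 1) = L x * ln K + g x * Aop d u x / K - L x"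
      by (simp add: algebra_simps)
    also have "g x * Aop d u x / K \<le> g x * (Aop d g x + K * \<delta>) / K"
      using gx K0 A_le[of x] by (intro divide_right_mono mult_left_mono) auto
    finally show ?thesis using ux by (simp add: algebra_simps)
  qed
  have "(\<Sum>x\<in>S. L x * (ln (u x) - ln (Aop d u x))) \<ge>
        (\<Sum>x\<in>S. L x - L x * ln K - g x * (Aop d g x + K * \<delta>) / K)"
    by (rule sum_mono) (rule pt)
  also have "(\<Sum>x\<in>S. L x - L x * ln K - g x * (Aop d g x + K * \<delta>) / K) =
     (\<Sum>x\<in>S. L x) - (\<Sum>x\<in>S. L x) * ln K - (\<Sum>x\<in>S. g x * Aop d g x) / K - \<delta> * (\<Sum>x\<in>S. g x)"
  proof -
    have "(\<Sum>x\<in>S. L x - L x * ln K - g x * (Aop d g x + K * \<delta>) / K) =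
       (\<Sum>x\<in>S. L x - L x * ln K - g x * Aop d g x / K - \<delta> * g x)"
      using K0 by (intro sum.cong refl) (simp add: field_simps)
    also have "\<dots> = (\<Sum>x\<in>S. L x) - (\<Sum>x\<in>S. L x) * ln K - (\<Sum>x\<in>S. g x * Aop d g x) / K - \<delta> * (\<Sum>x\<in>S. g x)"
      by (simp add: sum_subtractf sum_distrib_left sum_distrib_right sum_divide_distrib)
    finally show ?thesis .
  qed
  also have "(\<Sum>x\<in>S. L x) = real N" unfolding S_def L_def by (rule sum_local_time)
  finally have bS: "(\<Sum>x\<in>S. L x * (ln (u x) - ln (Aop d u x))) \<ge>
     real N - real N * ln K - (\<Sum>x\<in>S. g x * Aop d g x) / K - \<delta> * (\<Sum>x\<in>S. g x)" .
  have sg: "\<delta> * (\<Sum>x\<in>S. g x) \<le> 1"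
  proof -
    have "(\<Sum>x\<in>S. g x) \<le> (\<Sum>x\<in>S. L x)"
    proof (rule sum_mono)
      fix x assume "x \<in> S"
      then have "L x \<ge> 1" by (rule L1)
      then have s1: "sqrt (L x) \<ge> 1" by simp
      have "sqrt (L x) * 1 \<le> sqrt (L x) * sqrt (L x)" using s1 by (intro mult_left_mono) auto
      then have "sqrt (L x) \<le> sqrt (L x) * sqrt (L x)" by simp
      also have "\<dots> = L x" using \<open>L x \<ge> 1\<close> by simp
      finally show "g x \<le> L x" by (simp add: gL)
    qed
    also have "(\<Sum>x\<in>S. L x) = real N" unfolding S_def L_def by (rule sum_local_time)
    finally have "(\<Sum>x\<in>S. g x) \<le> real N" .
    then have "\<delta> * (\<Sum>x\<in>S. g x) \<le> \<delta> * real N" using \<delta>0 by (intro mult_left_mono) auto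
    then show ?thesis using N1 by (simp add: \<delta>_def)
  qed
  have E: "dirichlet d g = 2 * real N - 2 * (\<Sum>x\<in>S. g x * Aop d g x) / K"
  proof -
    have "dirichlet d g = (1 / (2 * real d)) * (2 * real (2*d) * (\<Sum>y\<in>S. (g y)\<^sup>2) - 2 * (\<Sum>y\<in>S. g y * Aop d g y))"
      by (rule dirichlet_formula[OF finS Sl g0])
    also have "(\<Sum>y\<in>S. (g y)\<^sup>2) = real N" unfolding gsq S_def L_def by (rule sum_local_time)
    finally show ?thesis using d1 by (simp add: K_def field_simps)
  qed
  have lnN: "ln (u (pos xs N)) \<ge> - ln (real N)"
  proof -
    have "ln \<delta> \<le> ln (u (pos xs N))" using u_ge[of "pos xs N"] \<delta>0 by (subst ln_le_cancel_iff) auto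
    then show ?thesis using N1 by (simp add: \<delta>_def ln_div)
  qed
  have ln0: "ln (u (pos xs 0)) \<le> ln (real N)"
  proof -
    have "pos xs 0 \<in> S" using N1 by (auto simp: S_def)
    then have "u (pos xs 0) = sqrt (L (pos xs 0))" using uS gL by simp
    also have "\<dots> \<le> sqrt (real N)" using LN by simp
    also have "\<dots> \<le> real N"
    proof -
      have s1: "sqrt (real N) \<ge> 1" using N1 by simp
      have "sqrt (real N) * 1 \<le> sqrt (real N) * sqrt (real N)" using s1 by (intro mult_left_mono) auto
      then show ?thesis by simp
    qed
    finally show ?thesis using u_pos[of "pos xs 0"] by (subst ln_le_cancel_iff) auto
  qed
  have lnK: "ln K = ln (2 * real d)" by (simp add: K_def)
  have "ln (Wt d u xs) \<ge> - ln (real N) - ln (real N) + (real N - real N * ln K - (\<Sum>x\<in>S. g x * Aop d g x) / K - 1)"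
    using lnW bS sg lnN ln0 by linarith
  moreover have "dirichlet d g / 2 = real N - (\<Sum>x\<in>S. g x * Aop d g x) / K" using E by simp
  ultimately show ?thesis unfolding lnK[symmetric] by linarith
qed



fun tl_set :: "nat \<Rightarrow> nat \<Rightarrow> (nat \<Rightarrow> int) list set" where
  "tl_set d 0 = {[]}"
| "tl_set d (Suc k) = (if k = 0 then {[(\<lambda>j. 0)]} else
     (\<lambda>(ys,j,e). ys @ [addv (ys!j) e]) ` (tl_set d k \<times> {..<k} \<times> unit_steps d))"

lemma tl_set_length: "ys \<in> tl_set d k \<Longrightarrow> length ys = k"
  by (induction k arbitrary: ys) (auto split: if_splits)

lemma tl_set_finite: "finite (tl_set d k)"
  by (induction k) (auto simp: finite_unit_steps)

lemma tl_set_card: assumes "d \<ge> 1" shows "card (tl_set d k) \<le> (k * (2*d)) ^ k"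
proof (induction k)
  case 0 then show ?case by simp
next
  case (Suc k)
  show ?case
  proof (cases "k = 0")
    case True then show ?thesis using assms by simp
  next
    case False
    have "card (tl_set d (Suc k)) \<le> card (tl_set d k \<times> {..<k} \<times> unit_steps d)"
      using False by (simp del: card_cartesian_product) (rule card_image_le, simp add: tl_set_finite finite_unit_steps)
    also have "\<dots> = card (tl_set d k) * (k * (2*d))"
      by (simp add: card_cartesian_product card_unit_steps)
    also have "\<dots> \<le> (k * (2*d)) ^ k * (k * (2*d))"
      using Suc.IH by (rule mult_right_mono) simp
    also have "\<dots> = (k * (2*d)) ^ Suc k" by simp
    also have "\<dots> \<le> (Suc k * (2*d)) ^ Suc k" by (intro power_mono) auto
    finally show ?thesis .
  qed
qed

lemma range_tree:
  assumes setxs: "set xs \<subseteq> unit_steps d"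
  shows "1 \<le> k \<Longrightarrow> k \<le> length xs \<Longrightarrow> \<exists>ys. ys \<in> tl_set d (card (pos xs ` {..<k})) \<and>
            set ys = pos xs ` {..<k} \<and> distinct ys"
proof (induction k)
  case 0 then show ?case by simp
next
  case (Suc k)
  show ?case
  proof (cases "k = 0")
    case True
    then have "{..<Suc k} = {0}" by auto
    then have "pos xs ` {..<Suc k} = {(\<lambda>j. 0)}" by (simp add: pos_0)
    then show ?thesis by (intro exI[of _ "[(\<lambda>j. 0)]"]) simp
  next
    case False
    have pr: "1 \<le> k" "k \<le> length xs" using False Suc.prems by auto
    from Suc.IH[OF pr] obtain ys where ys: "ys \<in> tl_set d (card (pos xs ` {..<k}))" "set ys = pos xs ` {..<k}" "distinct ys"
      by blast
    have lenys: "length ys = card (pos xs ` {..<k})" using ys(2,3) by (simp add: distinct_card[symmetric])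
    have ins: "pos xs ` {..<Suc k} = insert (pos xs k) (pos xs ` {..<k})"
      by (simp add: lessThan_Suc)
    show ?thesis
    proof (cases "pos xs k \<in> pos xs ` {..<k}")
      case True
      then have eqs: "pos xs ` {..<Suc k} = pos xs ` {..<k}" unfolding ins by (rule insert_absorb)
      show ?thesis unfolding eqs using ys by blast
    next
      case nin: False
      obtain k' where k': "k = Suc k'" using False by (cases k) auto
      have "pos xs k' \<in> set ys" using ys(2) k' by simp
      then obtain j where j: "j < length ys" "ys ! j = pos xs k'" by (metis in_set_conv_nth)
      have "k' < length xs" using Suc.prems k' by simp
      then have "xs ! k' \<in> set xs" by simp
      then have e: "xs ! k' \<in> unit_steps d" using setxs by blast
      have pk: "pos xs k = addv (ys ! j) (xs ! k')" using k' j by (simp add: pos_Suc)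
      define c where "c = card (pos xs ` {..<k})"
      have c0: "c \<noteq> 0" using False by (auto simp: c_def)
      have cS: "card (pos xs ` {..<Suc k}) = Suc c" using ins nin by (simp add: c_def)
      have mem: "(ys, j, xs!k') \<in> tl_set d c \<times> {..<c} \<times> unit_steps d"
        using ys(1) j lenys e unfolding c_def by auto
      have eqT: "tl_set d (Suc c) = (\<lambda>(ys,j,e). ys @ [addv (ys!j) e]) ` (tl_set d c \<times> {..<c} \<times> unit_steps d)"
        using c0 by simp
      have "ys @ [pos xs k] = (\<lambda>(ys,j,e). ys @ [addv (ys!j) e]) (ys, j, xs!k')" by (simp add: pk)
      then have T: "ys @ [pos xs k] \<in> tl_set d (Suc c)" unfolding eqT using mem by (rule image_eqI)
      have D: "distinct (ys @ [pos xs k])" using ys(2,3) nin by simp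
      have St: "set (ys @ [pos xs k]) = pos xs ` {..<Suc k}" using ys(2) ins by simp
      show ?thesis using T D St cS by (intro exI[of _ "ys @ [pos xs k]"]) simp
    qed
  qed
qed

definition decode :: "(nat \<Rightarrow> int) list \<Rightarrow> nat list \<Rightarrow> (nat \<Rightarrow> int) \<Rightarrow> nat" where
  "decode ys vs = (\<lambda>x. if x \<in> set ys then vs ! (SOME i. i < length ys \<and> ys ! i = x) else 0)"

lemma decode_correct:
  assumes "set ys = pos xs ` {..<N}"
  shows "decode ys (map (local_time xs N) ys) = local_time xs N"
proof
  fix x
  show "decode ys (map (local_time xs N) ys) x = local_time xs N x"
  proof (cases "x \<in> set ys")
    case True
    then have "\<exists>i. i < length ys \<and> ys ! i = x" by (metis in_set_conv_nth)
    then have "(SOME i. i < length ys \<and> ys ! i = x) < length ys \<and> ys ! (SOME i. i < length ys \<and> ys ! i = x) = x"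
      by (rule someI_ex)
    then show ?thesis using True by (simp add: decode_def)
  next
    case False
    then show ?thesis using assms by (simp add: decode_def local_time_zero)
  qed
qed

lemma profiles_card:
  assumes d1: "d \<ge> 1" and N1: "N \<ge> 1" and Ev: "Ev \<subseteq> walks d N"
    and cardS: "\<And>xs. xs \<in> Ev \<Longrightarrow> card (pos xs ` {..<N}) \<le> m"
  shows "card ((\<lambda>xs. local_time xs N) ` Ev) \<le> (m + 1) * (m * (2*d) * (N+1)) ^ m"
proof -
  define V where "V = (\<lambda>k::nat. {vs. set vs \<subseteq> {0..N} \<and> length vs = k})"
  define T where "T = (\<Union>k\<in>{..m}. (\<lambda>(ys,vs). decode ys vs) ` (tl_set d k \<times> V k))"
  have finV: "finite (V k)" for k unfolding V_def by (rule finite_lists_length_eq) simp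
  have cardV: "card (V k) = (N+1) ^ k" for k unfolding V_def by (subst card_lists_length_eq) auto
  have sub: "(\<lambda>xs. local_time xs N) ` Ev \<subseteq> T"
  proof
    fix p assume "p \<in> (\<lambda>xs. local_time xs N) ` Ev"
    then obtain xs where xs: "xs \<in> Ev" "p = local_time xs N" by auto
    have w: "set xs \<subseteq> unit_steps d" "length xs = N" using xs Ev by (auto simp: walks_def)
    obtain ys where ys: "ys \<in> tl_set d (card (pos xs ` {..<N}))" "set ys = pos xs ` {..<N}"
      using range_tree[OF w(1) N1] w by auto
    have "map (local_time xs N) ys \<in> V (card (pos xs ` {..<N}))"
      using tl_set_length[OF ys(1)] local_time_le[of xs N] by (auto simp: V_def)
    moreover have "p = decode ys (map (local_time xs N) ys)"
      using decode_correct[OF ys(2)] xs by simp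
    ultimately have "p \<in> (\<lambda>(ys,vs). decode ys vs) ` (tl_set d (card (pos xs ` {..<N})) \<times> V (card (pos xs ` {..<N})))"
      using ys(1) by (intro image_eqI[of _ _ "(ys, map (local_time xs N) ys)"]) auto
    then show "p \<in> T" unfolding T_def using cardS[OF xs(1)] by blast
  qed
  have finT: "finite T" unfolding T_def using tl_set_finite finV by auto
  have "card ((\<lambda>xs. local_time xs N) ` Ev) \<le> card T" by (rule card_mono[OF finT sub])
  also have "\<dots> \<le> (\<Sum>k\<le>m. card ((\<lambda>(ys,vs). decode ys vs) ` (tl_set d k \<times> V k)))"
    unfolding T_def by (rule card_UN_le) simp
  also have "\<dots> \<le> (\<Sum>k\<le>m. (m * (2*d) * (N+1)) ^ m)"
  proof (rule sum_mono)
    fix k assume k: "k \<in> {..m}"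
    have "card ((\<lambda>(ys,vs). decode ys vs) ` (tl_set d k \<times> V k)) \<le> card (tl_set d k \<times> V k)"
      by (rule card_image_le) (simp add: tl_set_finite finV)
    also have "\<dots> = card (tl_set d k) * (N+1)^k" by (simp only: card_cartesian_product cardV)
    also have "\<dots> \<le> (k * (2*d))^k * (N+1)^k" by (intro mult_right_mono tl_set_card[OF d1]) simp
    also have "\<dots> = (k * (2*d) * (N+1))^k" by (simp only: power_mult_distrib)
    also have "\<dots> \<le> (m * (2*d) * (N+1))^k" using k by (intro power_mono mult_right_mono) auto
    also have "\<dots> \<le> (m * (2*d) * (N+1))^m"
    proof (cases "m = 0")
      case True then show ?thesis using k by simp
    next
      case False
      then have "m * (2*d) \<ge> 1" using d1 by simp
      then have "m * (2*d) * (N+1) \<ge> 1 * 1" by (intro mult_mono) auto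
      then show ?thesis using k by (intro power_increasing) auto
    qed
    finally show "card ((\<lambda>(ys,vs). decode ys vs) ` (tl_set d k \<times> V k)) \<le> (m * (2*d) * (N+1)) ^ m" .
  qed
  also have "\<dots> = (m + 1) * (m * (2*d) * (N+1)) ^ m" by simp
  finally show ?thesis .
qed



lemma arith_bound:
  fixes d n m N :: nat and c :: real
  assumes d3: "d \<ge> 3" and c1: "c \<ge> 1" and n1: "real n \<ge> 4 * real d * c"
    and n2: "real n \<ge> 3 * real d + 4" and n3: "n \<ge> 3"
    and m1: "m \<ge> 1" and mc: "real m \<le> c * real n ^ d" and N: "N = n ^ (d + 2)"
  shows "ln (real ((m + 1) * (m * (2*d) * (N+1)) ^ m)) + 2 * ln (real N) + 1
         \<le> 4 * real d * c * real n ^ d * ln (real n)"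
proof -
  define x where "x = real n ^ d"
  define l where "l = ln (real n)"
  define Y where "Y = c * x * l"
  have npos: "real n > 0" using n3 by simp
  have l1: "l \<ge> 1"
  proof -
    have "exp 1 \<le> (3::real)" using exp_le by simp
    also have "\<dots> \<le> real n" using n3 by simp
    finally show ?thesis unfolding l_def using npos by (subst ln_ge_iff) auto
  qed
  have xn: "x \<ge> real n" unfolding x_def using power_increasing[of 1 d "real n"] n3 d3 by simp
  have x1: "x \<ge> 1" using xn n3 by simp
  have Y0: "Y \<ge> 0" using c1 x1 l1 by (simp add: Y_def)
  have Yge: "Y \<ge> c * x" using c1 x1 l1 unfolding Y_def
    by (metis mult_left_mono mult.right_neutral mult_nonneg_nonneg order_trans zero_le_one)
  have mx: "real m \<le> c * x" using mc by (simp add: x_def)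
  have "N > 0" unfolding N using n3 by simp
  then have Npos: "real N \<ge> 1" by simp
  have lnN: "ln (real N) = real (d+2) * l" unfolding N l_def of_nat_power by (rule ln_realpow)
  have dc0: "4 * real d * c > 0" using d3 c1 by simp
  have l4: "ln (4 * real d * c) \<le> l" unfolding l_def using n1 dc0 npos by (subst ln_le_cancel_iff) auto
  have cx0: "c * x \<ge> 0" using c1 x1 by simp
  have f1: "c * x * ln (4 * real d * c) \<le> Y"
    unfolding Y_def using l4 cx0 by (intro mult_left_mono) auto
  have "ln (2 * c) \<le> 2 * c - 1" using ln_le_minus_one[of "2*c"] c1 by simp
  then have f2: "ln 2 + ln c + 1 \<le> 2 * Y" using Yge c1 x1 by (simp add: ln_mult) (smt (verit) mult_left_mono mult_cancel_left1)
  have "(3 * real d + 4) * l \<le> x * l" using n2 xn l1 by (intro mult_right_mono) auto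
  also have "\<dots> \<le> Y" unfolding Y_def using c1 x1 l1
    by (metis mult.commute mult_left_mono mult.right_neutral mult.left_commute order_trans zero_le_one
        mult_nonneg_nonneg less_imp_le le_numeral_extra(1) linorder_le_cases mult_right_mono)
  finally have f3: "3 * (real d * l) + 4 * l \<le> Y" by (simp add: algebra_simps)
  have mK: "real (m * (2*d) * (N+1)) \<le> 4 * real d * c * x * real N"
  proof -
    have "real (m * (2*d) * (N+1)) = real m * (2 * real d) * (real N + 1)" by (simp add: algebra_simps)
    also have "\<dots> \<le> (c * x) * (2 * real d) * (2 * real N)"
      using mx Npos by (intro mult_mono) auto
    finally show ?thesis by (simp add: algebra_simps)
  qed
  have "m * (2*d) * (N+1) \<ge> 1 * 1 * 1" using m1 d3 by (intro mult_mono) auto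
  then have mKpos: "real (m * (2*d) * (N+1)) \<ge> 1" by linarith
  have "ln (real (m * (2*d) * (N+1))) \<le> ln (4 * real d * c * x * real N)"
  proof -
    have "0 < 4 * real d * c * x * real N" using dc0 x1 Npos by simp
    then show ?thesis using mK mKpos by (subst ln_le_cancel_iff) auto
  qed
  also have "\<dots> = ln (4 * real d * c) + ln x + ln (real N)"
    using dc0 x1 Npos d3 c1 by (simp add: ln_mult)
  also have "ln x = real d * l" unfolding x_def l_def by (simp add: ln_realpow)
  finally have lmK: "ln (real (m * (2*d) * (N+1))) \<le> ln (4 * real d * c) + real d * l + real (d+2) * l"
    using lnN by simp
  have lmK0: "ln (real (m * (2*d) * (N+1))) \<ge> 0" using mKpos by simp
  have "real m * ln (real (m * (2*d) * (N+1))) \<le> (c * x) * (ln (4 * real d * c) + real d * l + real (d+2) * l)"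
    using mx lmK lmK0 m1 by (intro mult_mono) auto
  also have "\<dots> = c * x * ln (4 * real d * c) + 2 * (real d * Y) + 2 * Y"
    by (simp add: Y_def algebra_simps)
  finally have f4: "real m * ln (real (m * (2*d) * (N+1))) \<le> c * x * ln (4 * real d * c) + 2 * (real d * Y) + 2 * Y" .
  have "real (m + 1) \<le> 2 * c * x" using mx m1 by simp
  then have "ln (real (m + 1)) \<le> ln (2 * c * x)" by (subst ln_le_cancel_iff) auto
  also have "\<dots> = ln 2 + ln c + real d * l" using c1 x1 n3 unfolding x_def l_def
    by (simp add: ln_mult ln_realpow)
  finally have f5: "ln (real (m + 1)) \<le> ln 2 + ln c + real d * l" .
  have f7: "real d * Y \<ge> 3 * Y" using d3 Y0 by (intro mult_right_mono) auto
  have lnP: "ln (real ((m + 1) * (m * (2*d) * (N+1)) ^ m)) = ln (real (m + 1)) + real m * ln (real (m * (2*d) * (N+1)))"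
  proof -
    have m0: "m \<noteq> 0" "d \<noteq> 0" using m1 d3 by auto
    have "real ((m + 1) * (m * (2*d) * (N+1)) ^ m) = real (m + 1) * real (m * (2*d) * (N+1)) ^ m"
      by (simp only: of_nat_mult of_nat_power)
    also have "ln \<dots> = ln (real (m + 1)) + ln (real (m * (2*d) * (N+1)) ^ m)"
      using mKpos by (intro ln_mult_pos) auto
    finally show ?thesis by (simp only: ln_realpow)
  qed
  have goal: "ln (real ((m + 1) * (m * (2*d) * (N+1)) ^ m)) + 2 * ln (real N) + 1 \<le> 4 * (real d * Y)"
    unfolding lnP lnN using f1 f2 f3 f4 f5 f7 by (simp add: algebra_simps)
  then show ?thesis by (simp add: Y_def x_def l_def algebra_simps)
qed



lemma Wt_pos: "d \<ge> 1 \<Longrightarrow> (\<And>x. u x > 0) \<Longrightarrow> Wt d u xs > 0"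
  unfolding Wt_def by (intro prod_pos ballI divide_pos_pos Aop_pos) auto

lemma main_bound:
  fixes d n :: nat and c \<kappa> :: real
  assumes d3: "d \<ge> 3" and c1: "c \<ge> 1" and n1: "real n \<ge> 4 * real d * c"
    and n2: "real n \<ge> 3 * real d + 4" and n3: "n \<ge> 3"
  shows "measure_pmf.prob (SRW d (n ^ (d + 2)))
       {xs. dirichlet d (\<lambda>x. sqrt (real (local_time xs (n ^ (d + 2)) x)))
              \<ge> \<kappa> * real n ^ d * ln (real n)
            \<and> real (card (range_set xs (n ^ (d + 2)))) \<le> c * real n ^ d}
     \<le> exp (- ((\<kappa> / 2 - 4 * real d * c) * real n ^ d * ln (real n)))"
proof -
  define N where "N = n ^ (d + 2)"
  define x where "x = real n ^ d"
  define l where "l = ln (real n)"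
  define A where "A = {xs. dirichlet d (\<lambda>y. sqrt (real (local_time xs N y))) \<ge> \<kappa> * x * l
            \<and> real (card (range_set xs N)) \<le> c * x}"
  define Ev where "Ev = walks d N \<inter> A"
  define m where "m = nat \<lfloor>c * x\<rfloor>"
  define P0 where "P0 = (m + 1) * (m * (2*d) * (N+1)) ^ m"
  define B where "B = \<kappa> * x * l / 2 - real N * ln (2 * real d) - 2 * ln (real N) - 1"
  define prof where "prof = (\<lambda>xs. local_time xs N)"
  have d1: "d \<ge> 1" using d3 by simp
  have N1: "N \<ge> 1" unfolding N_def using n3 by simp
  have x1: "x \<ge> 1" unfolding x_def using n3 by simp
  have cx1: "c * x \<ge> 1" using mult_mono[of 1 c 1 x] c1 x1 by simp
  then have fl1: "\<lfloor>c * x\<rfloor> \<ge> 1" by simp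
  then have m1: "m \<ge> 1" unfolding m_def by (subst le_nat_iff) auto
  have mreal: "real m = of_int \<lfloor>c * x\<rfloor>" using fl1 by (simp add: m_def)
  have mc: "real m \<le> c * real n ^ d" unfolding mreal x_def[symmetric] by (rule of_int_floor_le)
  have ne: "walks d N \<noteq> {}" using card_walks[of d N] d1 by (metis card.empty power_not_zero zero_neq_numeral mult_eq_0_iff not_one_le_zero)
  have prob: "measure_pmf.prob (SRW d N) A = real (card Ev) / real (card (walks d N))"
    unfolding SRW_def Ev_def using measure_pmf_of_set[OF ne finite_walks] by simp
  have EvW: "Ev \<subseteq> walks d N" unfolding Ev_def by auto
  have finEv: "finite Ev" using EvW finite_walks finite_subset by blast
  have cardS: "card (pos xs ` {..<N}) \<le> m" if xs: "xs \<in> Ev" for xs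
  proof -
    have "pos xs ` {..<N} \<subseteq> range_set xs N" unfolding range_set_def by auto
    then have "card (pos xs ` {..<N}) \<le> card (range_set xs N)"
      by (intro card_mono) (auto simp: range_set_def)
    moreover have "real (card (range_set xs N)) \<le> c * x" using xs by (simp add: Ev_def A_def)
    then have "int (card (range_set xs N)) \<le> \<lfloor>c * x\<rfloor>" by (simp add: le_floor_iff)
    then have "card (range_set xs N) \<le> m" unfolding m_def using fl1 by (subst le_nat_iff) auto
    ultimately show ?thesis by simp
  qed
  have profc: "card (prof ` Ev) \<le> P0" unfolding prof_def P0_def
    by (rule profiles_card[OF d1 N1 EvW cardS])
  have count: "real (card {xs \<in> Ev. prof xs = p}) \<le> exp (- B)" if p: "p \<in> prof ` Ev" for p
  proof -
    define u where "u = (\<lambda>y. if p y > 0 then sqrt (real (p y)) else 1 / real N)"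
    have upos: "u y > 0" for y using N1 by (auto simp: u_def)
    have W: "Wt d u xs \<ge> exp B" if xs: "xs \<in> {xs \<in> Ev. prof xs = p}" for xs
    proof -
      have xw: "xs \<in> walks d N" and xA: "xs \<in> A" and pp: "local_time xs N = p"
        using xs by (auto simp: Ev_def prof_def)
      have "ln (Wt d (\<lambda>x. if local_time xs N x > 0 then sqrt (real (local_time xs N x)) else 1 / real N) xs)
            \<ge> dirichlet d (\<lambda>x. sqrt (real (local_time xs N x))) / 2 - real N * ln (2 * real d) - 2 * ln (real N) - 1"
        by (rule walk_bound[OF d1 xw N1])
      then have h: "ln (Wt d u xs) \<ge> dirichlet d (\<lambda>x. sqrt (real (local_time xs N x))) / 2 - real N * ln (2 * real d) - 2 * ln (real N) - 1"
        unfolding u_def pp .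
      have "dirichlet d (\<lambda>x. sqrt (real (local_time xs N x))) \<ge> \<kappa> * x * l" using xA by (simp add: A_def)
      then have "ln (Wt d u xs) \<ge> B" using h unfolding B_def by linarith
      then have "exp B \<le> exp (ln (Wt d u xs))" by simp
      also have "\<dots> = Wt d u xs" using Wt_pos[OF d1 upos] by simp
      finally show ?thesis .
    qed
    have "real (card {xs \<in> Ev. prof xs = p}) * exp B = (\<Sum>xs\<in>{xs \<in> Ev. prof xs = p}. exp B)" by simp
    also have "\<dots> \<le> (\<Sum>xs\<in>{xs \<in> Ev. prof xs = p}. Wt d u xs)" by (rule sum_mono) (rule W)
    also have "\<dots> \<le> (\<Sum>xs\<in>walks d N. Wt d u xs)"
      by (rule sum_mono2[OF finite_walks]) (use EvW Wt_pos[OF d1 upos] in \<open>auto intro: less_imp_le\<close>)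
    also have "\<dots> = 1" by (rule Wt_sum[OF d1 upos])
    finally have "real (card {xs \<in> Ev. prof xs = p}) * exp B \<le> 1" .
    then show ?thesis by (simp add: exp_minus field_simps)
  qed
  have "card Ev \<le> (\<Sum>p\<in>prof ` Ev. card {xs \<in> Ev. prof xs = p})"
  proof -
    have "Ev = (\<Union>p\<in>prof ` Ev. {xs \<in> Ev. prof xs = p})" by auto
    then have "card Ev = card (\<Union>p\<in>prof ` Ev. {xs \<in> Ev. prof xs = p})" by simp
    also have "\<dots> \<le> (\<Sum>p\<in>prof ` Ev. card {xs \<in> Ev. prof xs = p})" by (rule card_UN_le) (simp add: finEv)
    finally show ?thesis .
  qed
  then have "real (card Ev) \<le> (\<Sum>p\<in>prof ` Ev. real (card {xs \<in> Ev. prof xs = p}))"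
    unfolding of_nat_sum[symmetric] of_nat_le_iff .
  also have "\<dots> \<le> (\<Sum>p\<in>prof ` Ev. exp (- B))" by (rule sum_mono) (rule count)
  also have "\<dots> = real (card (prof ` Ev)) * exp (- B)" by simp
  also have "\<dots> \<le> real P0 * exp (- B)" using profc by (intro mult_right_mono) auto
  finally have cEv: "real (card Ev) \<le> real P0 * exp (- B)" .
  have "P0 > 0" unfolding P0_def using m1 d1 by simp
  then have P0pos: "real P0 > 0" by simp
  have KN: "real (card (walks d N)) = exp (real N * ln (2 * real d))"
    using d1 by (simp add: card_walks exp_of_nat_mult)
  have "measure_pmf.prob (SRW d N) A \<le> real P0 * exp (- B) / exp (real N * ln (2 * real d))"
    unfolding prob KN by (intro divide_right_mono cEv) auto
  also have "\<dots> = exp (ln (real P0) + 2 * ln (real N) + 1 - \<kappa> * x * l / 2)"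
  proof -
    have "real P0 * exp (- B) / exp (real N * ln (2 * real d)) = exp (ln (real P0) + (- B) - real N * ln (2 * real d))"
      by (simp only: exp_add exp_diff exp_ln[OF P0pos])
    also have "ln (real P0) + (- B) - real N * ln (2 * real d) = ln (real P0) + 2 * ln (real N) + 1 - \<kappa> * x * l / 2"
      unfolding B_def by (simp add: algebra_simps)
    finally show ?thesis .
  qed
  also have "\<dots> \<le> exp (4 * real d * c * x * l - \<kappa> * x * l / 2)"
  proof -
    have "ln (real P0) + 2 * ln (real N) + 1 \<le> 4 * real d * c * x * l"
      unfolding P0_def x_def l_def by (rule arith_bound[OF d3 c1 n1 n2 n3 m1 mc N_def])
    then show ?thesis by simp
  qed
  also have "\<dots> = exp (- ((\<kappa> / 2 - 4 * real d * c) * x * l))" by (simp add: algebra_simps)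
  finally show ?thesis unfolding A_def N_def x_def l_def .
qed


theorem proposition4p1:
  fixes d :: nat and c \<kappa> :: real
  assumes "d \<ge> 3" and "c \<ge> 1" and "\<kappa> \<ge> 1" and "\<kappa> / 2 - 4 * real d * c > 0"
  shows "eventually (\<lambda>n::nat.
     measure_pmf.prob (SRW d (n ^ (d + 2)))
       {xs. dirichlet d (\<lambda>x. sqrt (real (local_time xs (n ^ (d + 2)) x)))
              \<ge> \<kappa> * real n ^ d * ln (real n)
            \<and> real (card (range_set xs (n ^ (d + 2)))) \<le> c * real n ^ d}
     \<le> exp (- ((\<kappa> / 2 - 4 * real d * c) * real n ^ d * ln (real n)))) sequentially"
  proof -
  define n0 where "n0 = nat \<lceil>4 * real d * c\<rceil> + 3 * d + 7"
  have "eventually (\<lambda>n. n \<ge> n0) sequentially" by (rule eventually_ge_at_top)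
  then show ?thesis
  proof (rule eventually_mono)
    fix n assume h: "n \<ge> n0"
    have "4 * real d * c \<le> real (nat \<lceil>4 * real d * c\<rceil>)" by (rule real_nat_ceiling_ge)
    also have "\<dots> \<le> real n"
    proof -
      have "nat \<lceil>4 * real d * c\<rceil> \<le> n0" unfolding n0_def by (rule le_trans[OF le_add1 le_add1])
      then have "nat \<lceil>4 * real d * c\<rceil> \<le> n" using h by (rule le_trans)
      then show ?thesis by (simp only: of_nat_le_iff)
    qed
    finally have n1: "real n \<ge> 4 * real d * c" .
    have n2: "real n \<ge> 3 * real d + 4" using h unfolding n0_def by simp
    have n3: "n \<ge> 3" using h unfolding n0_def by simp
    show "measure_pmf.prob (SRW d (n ^ (d + 2)))
       {xs. dirichlet d (\<lambda>x. sqrt (real (local_time xs (n ^ (d + 2)) x)))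
              \<ge> \<kappa> * real n ^ d * ln (real n)
            \<and> real (card (range_set xs (n ^ (d + 2)))) \<le> c * real n ^ d}
     \<le> exp (- ((\<kappa> / 2 - 4 * real d * c) * real n ^ d * ln (real n)))"
      by (rule main_bound[OF assms(1) assms(2) n1 n2 n3])
  qed
qed

end
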